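(* Let $M,N$ be weight sequences satisfying $m_k^{1/k}\to\infty$ and $n_k^{1/k}\to\infty$. Assume that there exists $C\ge1$ such that $\mu_j/j\le C\nu_k/k$ for all $1\le j\le k$. Then for all $t>0$, $\overline{\Gamma}_n(Ct)\le\underline{\Gamma}_m(t)$.
   Context: A weight sequence is given by an increasing sequence $1=\mu_0\le\mu_1\le\mu_2\le\cdots$ via $M_k=\mu_0\mu_1\cdots\mu_k=k!\,m_k$, with $M_k^{1/k}\to\infty$; analogously $\nu\leftrightarrow N\leftrightarrow n$. For a positive sequence $m$ with $m_0=1$ and $m_k^{1/k}\to\infty$ define $h_m(t)=\inf_{k\in\mathbb{N}}m_kt^k$ ($t>0$), $\overline{\Gamma}_m(t)=\min\{k: h_m(t)=m_kt^k\}$, and, if $m_{k+1}/m_k\to\infty$, $\underline{\Gamma}_m(t)=\min\{k: m_{k+1}/m_k\ge 1/t\}$. (Under the hypotheses, $m_{k+1}/m_k=\mu_{k+1}/(k+1)\to\infty$, so these are well defined.) *)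

theory Defs
  imports Complex_Main
begin

definition Mseq :: "(nat \<Rightarrow> real) \<Rightarrow> nat \<Rightarrow> real" where
  "Mseq \<mu> k = (\<Prod>i\<in>{0..k}. \<mu> i)"

definition mseq :: "(nat \<Rightarrow> real) \<Rightarrow> nat \<Rightarrow> real" where
  "mseq \<mu> k = Mseq \<mu> k / fact k"

definition weight_sequence :: "(nat \<Rightarrow> real) \<Rightarrow> bool" where
  "weight_sequence \<mu> \<longleftrightarrow> \<mu> 0 = 1 \<and> mono \<mu> \<and>
     filterlim (\<lambda>k. root k (Mseq \<mu> k)) at_top sequentially"

definition hfun :: "(nat \<Rightarrow> real) \<Rightarrow> real \<Rightarrow> real" where
  "hfun m t = (INF k. m k * t ^ k)"

definition Gamma_bar :: "(nat \<Rightarrow> real) \<Rightarrow> real \<Rightarrow> nat" where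
  "Gamma_bar m t = (LEAST k. hfun m t = m k * t ^ k)"

definition Gamma_under :: "(nat \<Rightarrow> real) \<Rightarrow> real \<Rightarrow> nat" where
  "Gamma_under m t = (LEAST k. m (Suc k) / m k \<ge> 1 / t)"

end

theory Submission
  imports Defs
begin

lemma mono_pos: assumes "weight_sequence \<mu>" shows "\<mu> i \<ge> 1"
proof -
  have "\<mu> 0 = 1" "mono \<mu>" using assms unfolding weight_sequence_def by auto
  then show ?thesis by (metis le0 monoD)
qed

lemma mseq_pos: assumes "weight_sequence \<mu>" shows "mseq \<mu> k > 0"
  unfolding mseq_def Mseq_def using mono_pos[OF assms]
  by (intro divide_pos_pos prod_pos) (auto intro: less_le_trans[OF zero_less_one])

lemma mseq_Suc: "mseq \<mu> (Suc k) = mseq \<mu> k * (\<mu> (Suc k) / real (Suc k))"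
  unfolding mseq_def Mseq_def by (simp add: prod.atLeast0_atMost_Suc field_simps)

lemma mseq_0: assumes "weight_sequence \<mu>" shows "mseq \<mu> 0 = 1"
  using assms unfolding mseq_def Mseq_def weight_sequence_def by simp

theorem lemma3p3:
  fixes \<mu> \<nu> :: "nat \<Rightarrow> real" and C :: real
  assumes "weight_sequence \<mu>" and "weight_sequence \<nu>"
    and "filterlim (\<lambda>k. root k (mseq \<mu> k)) at_top sequentially"
    and "filterlim (\<lambda>k. root k (mseq \<nu> k)) at_top sequentially"
    and "C \<ge> 1"
    and "\<And>j k. 1 \<le> j \<Longrightarrow> j \<le> k \<Longrightarrow> \<mu> j / real j \<le> C * \<nu> k / real k"
  shows "\<forall>t>0. Gamma_bar (mseq \<nu>) (C * t) \<le> Gamma_under (mseq \<mu>) t"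
proof (intro allI impI)
  fix t :: real assume t: "t > 0"
  have ex: "\<exists>k. mseq \<mu> (Suc k) / mseq \<mu> k \<ge> 1 / t"
  proof (rule ccontr)
    assume "\<not> ?thesis"
    then have lt: "\<And>k. mseq \<mu> (Suc k) / mseq \<mu> k < 1 / t" by (meson not_le)
    have bnd: "mseq \<mu> k \<le> (1/t)^k" for k
    proof (induction k)
      case 0 then show ?case using mseq_0[OF assms(1)] by simp
    next
      case (Suc k)
      have p: "mseq \<mu> k > 0" by (rule mseq_pos[OF assms(1)])
      have "mseq \<mu> (Suc k) < mseq \<mu> k * (1/t)" using lt[of k] p by (simp add: divide_less_eq mult.commute)
      also have "\<dots> \<le> (1/t)^k * (1/t)" using Suc t by (intro mult_right_mono) auto
      finally show ?case by (simp add: mult.commute)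
    qed
    have "eventually (\<lambda>k. root k (mseq \<mu> k) \<ge> 1/t + 1) sequentially"
      using assms(3) by (simp add: filterlim_at_top)
    then obtain N where N: "\<And>k. k \<ge> N \<Longrightarrow> root k (mseq \<mu> k) \<ge> 1/t + 1"
      by (auto simp: eventually_sequentially)
    define k where "k = Suc N"
    have "root k (mseq \<mu> k) \<le> root k ((1/t)^k)"
      using bnd[of k] mseq_pos[OF assms(1), of k] unfolding k_def by (subst real_root_le_iff) auto
    also have "\<dots> = 1/t" using t unfolding k_def by (intro real_root_pos2) auto
    finally show False using N[of k] unfolding k_def by simp
  qed
  define K where "K = Gamma_under (mseq \<mu>) t"
  have KI: "mseq \<mu> (Suc K) / mseq \<mu> K \<ge> 1 / t"
    unfolding K_def Gamma_under_def using ex by (rule LeastI_ex)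
  hence K1: "\<mu> (Suc K) / real (Suc K) \<ge> 1/t"
    using mseq_pos[OF assms(1), of K] by (simp add: mseq_Suc)
  define f where "f k = mseq \<nu> k * (C*t)^k" for k
  have fpos: "f k > 0" for k unfolding f_def using mseq_pos[OF assms(2)] t assms(5) by simp
  have stepf: "f k \<le> f (Suc k)" if "k \<ge> K" for k
  proof -
    have "\<mu> (Suc K) / real (Suc K) \<le> C * \<nu> (Suc k) / real (Suc k)"
      using assms(6)[of "Suc K" "Suc k"] that by simp
    with K1 have "1/t \<le> C * \<nu> (Suc k) / real (Suc k)" by linarith
    hence g: "1 \<le> \<nu> (Suc k) / real (Suc k) * (C * t)" using t by (simp add: field_simps)
    have "f (Suc k) = f k * (\<nu> (Suc k) / real (Suc k) * (C * t))"
      unfolding f_def by (simp add: mseq_Suc)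
    moreover have "f k * 1 \<le> f k * (\<nu> (Suc k) / real (Suc k) * (C * t))"
      using g fpos[of k] by (intro mult_left_mono) auto
    ultimately show ?thesis by simp
  qed
  have mon: "f K \<le> f k" if "k \<ge> K" for k
    using that
  proof (induction k rule: dec_induct)
    case base then show ?case by simp
  next
    case (step n) then show ?case using stepf[of n] by linarith
  qed
  have "Min (f ` {..K}) \<in> f ` {..K}" by (intro Min_in) auto
  then obtain k0 where k0: "k0 \<le> K" "f k0 = Min (f ` {..K})" by (metis atMost_iff imageE)
  have k0min: "f k0 \<le> f j" for j
  proof (cases "j \<le> K")
    case True then show ?thesis using k0 by simp
  next
    case False
    have "f k0 \<le> f K" using k0 by simp
    also have "\<dots> \<le> f j" using mon False by simp
    finally show ?thesis .
  qed
  have "hfun (mseq \<nu>) (C*t) = f k0"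
    unfolding hfun_def f_def[symmetric]
    by (rule cInf_eq_minimum) (use k0min in auto)
  hence "Gamma_bar (mseq \<nu>) (C*t) \<le> k0"
    unfolding Gamma_bar_def f_def by (intro Least_le) simp
  with k0 show "Gamma_bar (mseq \<nu>) (C * t) \<le> Gamma_under (mseq \<mu>) t"
    unfolding K_def by simp
qed

end
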